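(* Let $d\ge0$ be an integer, let $\mathcal W=\mathcal O\oplus\mathcal O$ on $\mathbb P^1$, and let $\mathcal L\subset\mathcal W$ be a line subbundle with $\mathcal L\cong\mathcal O(-d)$. Let $p_1,\dots,p_m\in\mathbb P^1$ be distinct points and let $\tilde{\mathcal W}$ be the shift of $\mathcal W$ along $\mathcal L$ at these points, i.e. the subsheaf of $\mathcal W(p_1+\cdots+p_m)$ of local sections $s$ such that $(t_is)(p_i)\in\mathcal L_{p_i}$ for each $i$, where $t_i$ is a local parameter at $p_i$. If $m>2d+1$, then $\tilde{\mathcal W}$ is not evenly split.
   Context: A rank $2$ bundle on $\mathbb P^1$ is evenly split if it is isomorphic to $\mathcal O(a)\oplus\mathcal O(b)$ with $|a-b|\le1$. *)

theory Defs
  imports "HOL-Computational_Algebra.Computational_Algebra"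
begin

text \<open>Model: P^1 over the complex numbers, with points  Some a  (a in C, affine
coordinate z) and  None  (the point at infinity).  Rank 2 vector bundles
considered here are locally free subsheaves of the constant sheaf C(z)^2; such a
subsheaf is determined by its stalks, given as a predicate  F q s  saying that the
rational vector s lies in the stalk F_q at the point q.\<close>

type_synonym rf = "complex poly fract"
type_synonym pt = "complex option"

definition regular_at :: "pt \<Rightarrow> rf \<Rightarrow> bool" where
  "regular_at q r = (\<exists>n d. d \<noteq> 0 \<and> r = Fract n d \<and>
     (case q of Some a \<Rightarrow> poly d a \<noteq> 0 | None \<Rightarrow> degree n \<le> degree d))"

definition value_at :: "pt \<Rightarrow> rf \<Rightarrow> complex" where
  "value_at q r = (THE v. \<exists>n d. d \<noteq> 0 \<and> r = Fract n d \<and>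
     (case q of Some a \<Rightarrow> poly d a \<noteq> 0 \<and> v = poly n a / poly d a
              | None \<Rightarrow> degree n \<le> degree d \<and> v = coeff n (degree d) / lead_coeff d))"

definition zcoord :: rf where "zcoord = Fract [:0, 1:] 1"

definition local_param :: "pt \<Rightarrow> rf" where
  "local_param q = (case q of Some a \<Rightarrow> Fract [:-a, 1:] 1 | None \<Rightarrow> Fract 1 [:0, 1:])"

text \<open>Stalks of O(a) + O(b), realised as O(a\<infinity>) + O(b\<infinity>) inside C(z)^2.\<close>
definition split_stalk :: "int \<Rightarrow> int \<Rightarrow> pt \<Rightarrow> rf \<times> rf \<Rightarrow> bool" where
  "split_stalk a b q s = (case q of
      Some _ \<Rightarrow> regular_at q (fst s) \<and> regular_at q (snd s)
    | None \<Rightarrow> regular_at None (zcoord powi (-a) * fst s) \<and>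
              regular_at None (zcoord powi (-b) * snd s))"

text \<open>A line subbundle L of W = O + O with L \<cong> O(-d) is the image of an injective
bundle map O(-d) \<rightarrow> O + O, i.e. a pair (F,G) of binary forms of degree d without
common zero on P^1.  We record them by their dehomogenisations f = F(z,1), g = G(z,1):
they have degree \<le> d, no common finite zero (coprime), and F, G do not both vanish at
infinity (not both coefficients of z^d are zero).\<close>
definition line_subbundle :: "nat \<Rightarrow> complex poly \<Rightarrow> complex poly \<Rightarrow> bool" where
  "line_subbundle d f g = (degree f \<le> d \<and> degree g \<le> d \<and> coprime f g \<and>
                           (coeff f d \<noteq> 0 \<or> coeff g d \<noteq> 0))"

definition line_fiber :: "nat \<Rightarrow> complex poly \<Rightarrow> complex poly \<Rightarrow> pt \<Rightarrow> (complex \<times> complex) set" where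
  "line_fiber d f g q = (case q of
      Some a \<Rightarrow> {(c * poly f a, c * poly g a) | c. True}
    | None \<Rightarrow> {(c * coeff f d, c * coeff g d) | c. True})"

definition shift_stalk :: "nat \<Rightarrow> complex poly \<Rightarrow> complex poly \<Rightarrow> pt set \<Rightarrow> pt \<Rightarrow> rf \<times> rf \<Rightarrow> bool" where
  "shift_stalk d f g P q s =
     (if q \<in> P then
        regular_at q (local_param q * fst s) \<and> regular_at q (local_param q * snd s) \<and>
        (value_at q (local_param q * fst s), value_at q (local_param q * snd s)) \<in> line_fiber d f g q
      else regular_at q (fst s) \<and> regular_at q (snd s))"

text \<open>Isomorphism of two such subsheaves of C(z)^2: an isomorphism of O-modules
extends to a C(z)-linear automorphism of C(z)^2, i.e. an invertible 2x2 matrix over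
C(z), mapping every stalk of the first onto the corresponding stalk of the second.\<close>
definition sheaf_iso :: "(pt \<Rightarrow> rf \<times> rf \<Rightarrow> bool) \<Rightarrow> (pt \<Rightarrow> rf \<times> rf \<Rightarrow> bool) \<Rightarrow> bool" where
  "sheaf_iso F G = (\<exists>a b c e :: rf. a * e - b * c \<noteq> 0 \<and>
      (\<forall>q s. F q s \<longleftrightarrow> G q (a * fst s + b * snd s, c * fst s + e * snd s)))"

definition evenly_split :: "(pt \<Rightarrow> rf \<times> rf \<Rightarrow> bool) \<Rightarrow> bool" where
  "evenly_split F = (\<exists>a b :: int. \<bar>a - b\<bar> \<le> 1 \<and> sheaf_iso F (split_stalk a b))"

end

theory Submission
  imports Defs
begin

lemma fract_eq_iff: "b \<noteq> 0 \<Longrightarrow> d \<noteq> 0 \<Longrightarrow> Fract a b = Fract c d \<longleftrightarrow> a * d = c * b"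
  by (simp add: eq_fract)

lemma coeff_mult_le:
  fixes p q :: "'a::idom poly"
  assumes "degree p \<le> i" "degree q \<le> j"
  shows "coeff (p * q) (i + j) = coeff p i * coeff q j"
proof (cases "degree p = i \<and> degree q = j")
  case True thus ?thesis using coeff_mult_degree_sum by metis
next
  case False
  hence "degree (p*q) < i + j" using degree_mult_le[of p q] assms by linarith
  hence "coeff (p*q) (i+j) = 0" by (simp add: coeff_eq_0)
  moreover have "coeff p i * coeff q j = 0" using False assms
    by (metis coeff_eq_0 le_neq_implies_less mult_eq_0_iff)
  ultimately show ?thesis by simp
qed

lemma cancel_aux:
  fixes b d x y v :: "'a::field"
  assumes "b \<noteq> 0" "b * x = d * y" "v * b = y"
  shows "v * d = x"
proof -
  have "b * x = b * (v * d)" using assms(2,3) by (simp add: ac_simps)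
  thus ?thesis using assms(1) by simp
qed

lemma reg_fin_I: "d \<noteq> 0 \<Longrightarrow> poly d a \<noteq> 0 \<Longrightarrow> regular_at (Some a) (Fract n d)"
  unfolding regular_at_def by auto

lemma reg_inf_I: "d \<noteq> 0 \<Longrightarrow> degree n \<le> degree d \<Longrightarrow> regular_at None (Fract n d)"
  unfolding regular_at_def by auto

lemma reg_fin_D:
  assumes "d \<noteq> 0" "n \<noteq> 0" "regular_at (Some a) (Fract n d)"
  shows "order a d \<le> order a n"
proof -
  obtain n' d' where d': "d' \<noteq> 0" "Fract n d = Fract n' d'" "poly d' a \<noteq> 0"
    using assms(3) unfolding regular_at_def by auto
  hence e: "n * d' = n' * d" using assms by (simp add: eq_fract)
  hence "n' \<noteq> 0" using assms d' by auto
  have "order a (n * d') = order a n" using order_mult[of n d' a] assms d' order_0I by simp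
  moreover have "order a (n' * d) = order a n' + order a d"
    using order_mult[of n' d a] assms \<open>n' \<noteq> 0\<close> by simp
  ultimately show ?thesis using e by simp
qed

lemma reg_inf_D:
  assumes "d \<noteq> 0" "n \<noteq> 0" "regular_at None (Fract n d)"
  shows "degree n \<le> degree d"
proof -
  obtain n' d' where d': "d' \<noteq> 0" "Fract n d = Fract n' d'" "degree n' \<le> degree d'"
    using assms(3) unfolding regular_at_def by auto
  hence e: "n * d' = n' * d" using assms by (simp add: eq_fract)
  hence "n' \<noteq> 0" using assms d' by auto
  have "degree n + degree d' = degree n' + degree d"
    using e degree_mult_eq[of n d'] degree_mult_eq[of n' d] assms d' \<open>n' \<noteq> 0\<close> by simp
  thus ?thesis using d' by linarith
qed

lemma val_fin:
  assumes "d \<noteq> 0" "poly d a \<noteq> 0"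
  shows "value_at (Some a) (Fract n d) = poly n a / poly d a"
  unfolding value_at_def
proof (rule the_equality, goal_cases)
  case 1 show ?case by (intro exI[of _ n] exI[of _ d]) (simp add: assms)
next
  case (2 v)
  then obtain n' d' where d': "d' \<noteq> 0" "Fract n d = Fract n' d'" "poly d' a \<noteq> 0" "v = poly n' a / poly d' a"
    by auto
  hence "n * d' = n' * d" using assms by (simp add: eq_fract)
  hence "poly n a * poly d' a = poly n' a * poly d a" by (metis poly_mult)
  hence e1: "poly d' a * poly n a = poly d a * poly n' a" by (simp add: ac_simps)
  have e2: "v * poly d' a = poly n' a" using d'(3,4) by simp
  have "v * poly d a = poly n a" using cancel_aux[OF d'(3) e1 e2] .
  thus "v = poly n a / poly d a" using assms(2) by (simp add: field_simps)
qed

lemma val_inf: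
  assumes "d \<noteq> 0" "degree n \<le> degree d"
  shows "value_at None (Fract n d) = coeff n (degree d) / lead_coeff d"
  unfolding value_at_def
proof (rule the_equality, goal_cases)
  case 1 show ?case by (intro exI[of _ n] exI[of _ d]) (simp add: assms)
next
  case (2 v)
  then obtain n' d' where d': "d' \<noteq> 0" "Fract n d = Fract n' d'" "degree n' \<le> degree d'"
     "v = coeff n' (degree d') / lead_coeff d'"
    by auto
  hence "n * d' = n' * d" using assms by (simp add: eq_fract)
  hence "coeff (n * d') (degree d + degree d') = coeff (n' * d) (degree d' + degree d)"
    by (simp add: add.commute)
  hence "coeff n (degree d) * lead_coeff d' = coeff n' (degree d') * lead_coeff d"
    using coeff_mult_le[of n "degree d" d' "degree d'"] coeff_mult_le[of n' "degree d'" d "degree d"]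
      assms d' by simp
  moreover have "lead_coeff d \<noteq> 0" "lead_coeff d' \<noteq> 0" using assms d' by auto
  moreover have "v * lead_coeff d' = coeff n' (degree d')" using d'(4) d'(1) by simp
  ultimately have "(v * lead_coeff d) * lead_coeff d' = coeff n (degree d) * lead_coeff d'"
    by (metis mult.commute mult.left_commute)
  hence "v * lead_coeff d = coeff n (degree d)" using \<open>lead_coeff d' \<noteq> 0\<close> by simp
  thus "v = coeff n (degree d) / lead_coeff d" using \<open>lead_coeff d \<noteq> 0\<close> by (simp add: field_simps)
qed

lemma reg_fin_E:
  assumes "regular_at (Some a) x"
  obtains n d where "d \<noteq> 0" "x = Fract n d" "poly d a \<noteq> 0"
  using assms unfolding regular_at_def by auto

lemma reg_inf_E:
  assumes "regular_at None x"
  obtains n d where "d \<noteq> 0" "x = Fract n d" "degree n \<le> degree d"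
  using assms unfolding regular_at_def by auto

lemma reg_mult:
  assumes "regular_at q x" "regular_at q y"
  shows "regular_at q (x * y) \<and> value_at q (x * y) = value_at q x * value_at q y"
proof (cases q)
  case None
  obtain n d where 1: "d \<noteq> 0" "x = Fract n d" "degree n \<le> degree d"
    using assms(1) None reg_inf_E by blast
  obtain n' d' where 2: "d' \<noteq> 0" "y = Fract n' d'" "degree n' \<le> degree d'"
    using assms(2) None reg_inf_E by blast
  have xy: "x * y = Fract (n * n') (d * d')" using 1 2 by simp
  have dd: "degree (d * d') = degree d + degree d'" using 1 2 degree_mult_eq by blast
  have dg: "degree (n * n') \<le> degree (d * d')"
    using degree_mult_le[of n n'] 1 2 dd by linarith
  have r: "regular_at None (x * y)" using xy dg 1 2 reg_inf_I by simp
  have ld: "coeff (d*d') (degree d + degree d') = lead_coeff d * lead_coeff d'"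
    by (rule coeff_mult_degree_sum)
  have "value_at None (x * y) = coeff (n*n') (degree d + degree d') / (lead_coeff d * lead_coeff d')"
    using val_inf[OF _ dg] xy dd 1 2 ld by simp
  also have "\<dots> = (coeff n (degree d) / lead_coeff d) * (coeff n' (degree d') / lead_coeff d')"
    using coeff_mult_le[of n "degree d" n' "degree d'"] 1 2 by simp
  also have "\<dots> = value_at None x * value_at None y"
    using val_inf[of d n] val_inf[of d' n'] 1 2 by simp
  finally show ?thesis using None r by simp
next
  case (Some a)
  obtain n d where 1: "d \<noteq> 0" "x = Fract n d" "poly d a \<noteq> 0"
    using assms(1) Some reg_fin_E by blast
  obtain n' d' where 2: "d' \<noteq> 0" "y = Fract n' d'" "poly d' a \<noteq> 0"
    using assms(2) Some reg_fin_E by blast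
  have xy: "x * y = Fract (n * n') (d * d')" using 1 2 by simp
  have "regular_at (Some a) (x * y)" using xy 1 2 reg_fin_I by simp
  moreover have "value_at (Some a) (x * y) = value_at (Some a) x * value_at (Some a) y"
    using xy 1 2 val_fin[of "d*d'" a] val_fin[of d a] val_fin[of d' a] by simp
  ultimately show ?thesis using Some by simp
qed

lemma reg_diff:
  assumes "regular_at q x" "regular_at q y"
  shows "regular_at q (x - y) \<and> value_at q (x - y) = value_at q x - value_at q y"
proof (cases q)
  case None
  obtain n d where 1: "d \<noteq> 0" "x = Fract n d" "degree n \<le> degree d"
    using assms(1) None reg_inf_E by blast
  obtain n' d' where 2: "d' \<noteq> 0" "y = Fract n' d'" "degree n' \<le> degree d'"
    using assms(2) None reg_inf_E by blast
  have xy: "x - y = Fract (n * d' - n' * d) (d * d')" using 1 2 by simp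
  have dd: "degree (d * d') = degree d + degree d'" using 1 2 degree_mult_eq by blast
  have dg: "degree (n * d' - n' * d) \<le> degree (d * d')"
    using degree_mult_le[of n d'] degree_mult_le[of n' d] 1 2 dd
    by (intro degree_diff_le) linarith+
  have r: "regular_at None (x - y)" using xy dg 1 2 reg_inf_I by simp
  have ld: "coeff (d*d') (degree d + degree d') = lead_coeff d * lead_coeff d'"
    by (rule coeff_mult_degree_sum)
  have "value_at None (x - y) = coeff (n * d' - n' * d) (degree d + degree d') / (lead_coeff d * lead_coeff d')"
    using val_inf[OF _ dg] xy dd 1 2 ld by simp
  also have "\<dots> = (coeff n (degree d) * lead_coeff d' - coeff n' (degree d') * lead_coeff d) / (lead_coeff d * lead_coeff d')"
    using coeff_mult_le[of n "degree d" d' "degree d'"] coeff_mult_le[of n' "degree d'" d "degree d"] 1 2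
    by (simp add: add.commute)
  also have "\<dots> = (coeff n (degree d) / lead_coeff d) - (coeff n' (degree d') / lead_coeff d')"
    using 1 2 by (simp add: field_simps)
  also have "\<dots> = value_at None x - value_at None y"
    using val_inf[of d n] val_inf[of d' n'] 1 2 by simp
  finally show ?thesis using None r by simp
next
  case (Some a)
  obtain n d where 1: "d \<noteq> 0" "x = Fract n d" "poly d a \<noteq> 0"
    using assms(1) Some reg_fin_E by blast
  obtain n' d' where 2: "d' \<noteq> 0" "y = Fract n' d'" "poly d' a \<noteq> 0"
    using assms(2) Some reg_fin_E by blast
  have xy: "x - y = Fract (n * d' - n' * d) (d * d')" using 1 2 by simp
  have r: "regular_at (Some a) (x - y)" using xy 1 2 reg_fin_I by simp
  have "value_at (Some a) (x - y) = poly (n * d' - n' * d) a / poly (d * d') a"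
    using xy 1 2 val_fin[of "d*d'" a] by simp
  also have "\<dots> = poly n a / poly d a - poly n' a / poly d' a" using 1 2 by (simp add: field_simps)
  also have "\<dots> = value_at (Some a) x - value_at (Some a) y" using val_fin 1 2 by simp
  finally show ?thesis using Some r by simp
qed

lemma reg_const: "regular_at q (Fract [:c:] 1) \<and> value_at q (Fract [:c:] 1) = c"
  by (cases q) (auto simp: reg_fin_I reg_inf_I val_fin val_inf)

lemma reg_zero: "regular_at q 0 \<and> value_at q 0 = 0"
  using reg_const[of q 0] by (simp add: Zero_fract_def)

lemma reg_one: "regular_at q 1 \<and> value_at q 1 = 1"
  using reg_const[of q 1] by (simp add: One_fract_def one_pCons)

lemma reg_param: "regular_at q (local_param q) \<and> value_at q (local_param q) = 0"
  by (cases q) (auto simp: local_param_def reg_fin_I reg_inf_I val_fin val_inf)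

lemma reg_div_param:
  assumes "regular_at q (local_param q * y)" "value_at q (local_param q * y) = 0"
  shows "regular_at q y"
proof (cases q)
  case None
  obtain n d where 1: "d \<noteq> 0" "local_param q * y = Fract n d" "degree n \<le> degree d"
    using assms(1) None reg_inf_E by blast
  have "coeff n (degree d) = 0" using assms(2) 1 None val_inf[of d n] by simp
  have dl: "degree ([:0,1:] * n) \<le> degree d"
  proof (cases "n = 0")
    case False
    hence "degree n \<noteq> degree d" using \<open>coeff n (degree d) = 0\<close> by (metis leading_coeff_0_iff)
    hence "degree n < degree d" using 1 by simp
    thus ?thesis using degree_mult_le[of "[:0,1:]" n] by simp
  qed simp
  have "local_param q * Fract ([:0,1:] * n) d = Fract n d"
    using None 1 by (simp add: local_param_def eq_fract mult_pCons_right)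
  moreover have "local_param q \<noteq> 0" using None by (simp add: local_param_def eq_fract Zero_fract_def)
  ultimately have "y = Fract ([:0,1:] * n) d" using 1 by (metis mult_cancel_left)
  thus ?thesis using None dl 1 reg_inf_I by simp
next
  case (Some a)
  obtain n d where 1: "d \<noteq> 0" "local_param q * y = Fract n d" "poly d a \<noteq> 0"
    using assms(1) Some reg_fin_E by blast
  have "poly n a = 0" using assms(2) 1 Some val_fin[of d a n] by simp
  then obtain n1 where n1: "n = [:-a,1:] * n1" using dvd_iff_poly_eq_0[of "-a" n]
    by (auto elim: dvdE)
  have "local_param q * Fract n1 d = Fract n d" using Some 1 n1 by (simp add: local_param_def)
  moreover have "local_param q \<noteq> 0" using Some by (simp add: local_param_def eq_fract Zero_fract_def)
  ultimately have "y = Fract n1 d" using 1 by (metis mult_cancel_left)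
  thus ?thesis using Some 1 reg_fin_I by simp
qed

abbreviation X :: "complex poly" where "X \<equiv> [:0, 1:]"

lemma zcoord_nz: "zcoord \<noteq> 0"
  by (simp add: zcoord_def eq_fract Zero_fract_def)

lemma zcoord_pow: "zcoord ^ k = Fract (X ^ k) 1"
  by (induction k) (simp_all add: zcoord_def One_fract_def)

lemma param_inf: "local_param None = inverse zcoord"
  by (simp add: local_param_def zcoord_def)

lemma zpowi_fract:
  assumes "d \<noteq> 0"
  shows "zcoord powi j * Fract n d =
    (if j \<ge> 0 then Fract (X ^ nat j * n) d else Fract n (X ^ nat (-j) * d))"
proof (cases "j \<ge> 0")
  case True thus ?thesis using assms by (simp add: power_int_def zcoord_pow)
next
  case False
  have "inverse zcoord ^ k = Fract 1 (X ^ k)" for k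
    by (induction k) (simp_all add: zcoord_def One_fract_def)
  thus ?thesis using False assms by (simp add: power_int_def mult.commute)
qed

lemma degX: "degree (X ^ k * n) = (if n = 0 then 0 else k + degree n)"
  by (cases "n = 0") (simp_all add: degree_mult_eq degree_power_eq)

lemma reg_inf_z_iff:
  assumes "n \<noteq> 0" "d \<noteq> 0"
  shows "regular_at None (zcoord powi j * Fract n d) \<longleftrightarrow> j + int (degree n) \<le> int (degree d)"
proof (cases "j \<ge> 0")
  case True
  have "regular_at None (Fract (X ^ nat j * n) d) \<longleftrightarrow> degree (X ^ nat j * n) \<le> degree d"
    using reg_inf_D[of d "X ^ nat j * n"] reg_inf_I[of d "X ^ nat j * n"] assms by auto
  thus ?thesis using True assms zpowi_fract[OF assms(2), of j n] degX[of "nat j" n] by (simp; arith)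
next
  case False
  have "regular_at None (Fract n (X ^ nat (-j) * d)) \<longleftrightarrow> degree n \<le> degree (X ^ nat (-j) * d)"
    using reg_inf_D[of "X ^ nat (-j) * d" n] reg_inf_I[of "X ^ nat (-j) * d" n] assms by auto
  thus ?thesis using False assms zpowi_fract[OF assms(2), of j n] degX[of "nat (-j)" d] by (simp; arith)
qed

lemma poly_of_reg_aux:
  assumes "\<And>a. regular_at (Some a) r"
  shows "d \<noteq> 0 \<Longrightarrow> r = Fract n d \<Longrightarrow> \<exists>p. r = Fract p 1"
proof (induction "degree d" arbitrary: n d rule: less_induct)
  case less
  show ?case
  proof (cases "n = 0")
    case True thus ?thesis using less by (auto simp: eq_fract)
  next
    case n0: False
    show ?thesis
    proof (cases "degree d = 0")
      case True
      then obtain c where c: "d = [:c:]" "c \<noteq> 0" using less(2) by (metis degree_eq_zeroE pCons_eq_0_iff)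
      have "Fract n d = Fract (smult (1/c) n) 1" using c by (simp add: eq_fract)
      thus ?thesis using less by auto
    next
      case False
      then obtain a where a: "poly d a = 0"
        by (metis constant_degree fundamental_theorem_of_algebra)
      have "order a d \<le> order a n" using reg_fin_D[OF less(2) n0] assms less(3) by simp
      moreover have "order a d \<noteq> 0" using a less(2) order_root by blast
      ultimately have "poly n a = 0" using order_root by fastforce
      then obtain n1 where n1: "n = [:-a,1:] * n1" using dvd_iff_poly_eq_0[of "-a" n]
        by (auto elim: dvdE)
      obtain d1 where d1: "d = [:-a,1:] * d1" using a dvd_iff_poly_eq_0[of "-a" d]
        by (auto elim: dvdE)
      have "d1 \<noteq> 0" using d1 less(2) by auto
      have "degree d = degree [:-a,1:] + degree d1" using d1 \<open>d1 \<noteq> 0\<close> degree_mult_eq[of "[:-a,1:]" d1]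
        by (simp del: mult_pCons_left)
      hence "degree d1 < degree d" by simp
      moreover have "r = Fract n1 d1" using less(3) n1 d1 mult_fract_cancel[of "[:-a,1:]" n1 d1]
        by (simp del: mult_pCons_left)
      ultimately show ?thesis using less(1) \<open>d1 \<noteq> 0\<close> by blast
    qed
  qed
qed

lemma poly_of_reg:
  assumes "\<And>a. regular_at (Some a) r"
  shows "\<exists>p. r = Fract p 1"
proof -
  obtain n d where nd: "r = Fract n d" "d \<noteq> 0" by (cases r) auto
  thus ?thesis using poly_of_reg_aux[OF assms] by blast
qed

lemma deg_le_card:
  fixes D :: "complex poly"
  assumes "D \<noteq> 0" "finite S" "\<And>q. order q D \<le> (if q \<in> S then 1 else 0)"
  shows "degree D \<le> card S"
proof -
  have "proots D \<subseteq># mset_set S"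
  proof (rule mset_subset_eqI)
    fix a show "count (proots D) a \<le> count (mset_set S) a"
      using assms(3)[of a] assms(1,2) by (cases "a \<in> S") (auto simp: count_mset_set)
  qed
  hence "size (proots D) \<le> size (mset_set S)" by (rule size_mset_mono)
  thus ?thesis using size_proots_complex[of D] by simp
qed

definition hpoly :: "complex set \<Rightarrow> complex poly" where
  "hpoly S = (\<Prod>q\<in>S. [:-q, 1:])"

lemma hpoly_nz: "hpoly S \<noteq> 0"
  unfolding hpoly_def by (cases "finite S") (auto)

lemma hpoly_deg: "finite S \<Longrightarrow> degree (hpoly S) = card S"
  unfolding hpoly_def by (subst degree_prod_sum_eq) auto

lemma hpoly_lead: "lead_coeff (hpoly S) = 1"
  unfolding hpoly_def by (simp add: lead_coeff_prod)

lemma hpoly_notin: "finite S \<Longrightarrow> q \<notin> S \<Longrightarrow> poly (hpoly S) q \<noteq> 0"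
  unfolding hpoly_def by (auto simp: poly_prod)

lemma hpoly_in: "finite S \<Longrightarrow> q \<in> S \<Longrightarrow> hpoly S = [:-q,1:] * hpoly (S - {q})"
  unfolding hpoly_def by (metis prod.remove)

lemma W_in:
  assumes "regular_at q x" "regular_at q y"
  shows "shift_stalk d f g P q (x, y)"
proof (cases "q \<in> P")
  case True
  have 1: "regular_at q (local_param q * x) \<and> value_at q (local_param q * x) = 0"
    using reg_mult[OF conjunct1[OF reg_param] assms(1)] reg_param[of q] by simp
  have 2: "regular_at q (local_param q * y) \<and> value_at q (local_param q * y) = 0"
    using reg_mult[OF conjunct1[OF reg_param] assms(2)] reg_param[of q] by simp
  have "(0, 0) \<in> line_fiber d f g q" by (cases q) (auto simp: line_fiber_def)
  thus ?thesis using True 1 2 by (simp add: shift_stalk_def)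
next
  case False thus ?thesis using assms by (simp add: shift_stalk_def)
qed

lemma fiber_form: "\<exists>F1 G1. line_fiber d f g q = {(c * F1, c * G1) | c. True}"
  by (cases q) (auto simp: line_fiber_def)

lemma det_lemma:
  assumes 1: "shift_stalk d f g P q (x1, y1)" and 2: "shift_stalk d f g P q (x2, y2)"
  shows "(q \<notin> P \<longrightarrow> regular_at q (x1 * y2 - x2 * y1)) \<and>
         (q \<in> P \<longrightarrow> regular_at q (local_param q * (x1 * y2 - x2 * y1)))"
proof (cases "q \<in> P")
  case False
  hence "regular_at q x1" "regular_at q y1" "regular_at q x2" "regular_at q y2"
    using 1 2 by (auto simp: shift_stalk_def)
  thus ?thesis using False reg_diff reg_mult by blast
next
  case True
  define t where "t = local_param q"
  obtain F1 G1 where lf: "line_fiber d f g q = {(c * F1, c * G1) | c. True}" using fiber_form by blast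
  have r: "regular_at q (t*x1)" "regular_at q (t*y1)" "regular_at q (t*x2)" "regular_at q (t*y2)"
    using 1 2 True by (auto simp: shift_stalk_def t_def)
  obtain c1 where c1: "value_at q (t*x1) = c1 * F1" "value_at q (t*y1) = c1 * G1"
    using 1 True lf by (auto simp: shift_stalk_def t_def)
  obtain c2 where c2: "value_at q (t*x2) = c2 * F1" "value_at q (t*y2) = c2 * G1"
    using 2 True lf by (auto simp: shift_stalk_def t_def)
  define A where "A = (t*x1)*(t*y2) - (t*x2)*(t*y1)"
  have rA: "regular_at q A \<and> value_at q A = 0"
    using reg_diff[OF conjunct1[OF reg_mult[OF r(1) r(4)]] conjunct1[OF reg_mult[OF r(3) r(2)]]]
      reg_mult[OF r(1) r(4)] reg_mult[OF r(3) r(2)] c1 c2 unfolding A_def by simp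
  have "A = t * (t * (x1 * y2 - x2 * y1))" unfolding A_def by (simp add: algebra_simps)
  hence "regular_at q (t * (x1 * y2 - x2 * y1))"
    using reg_div_param[of q "t * (x1 * y2 - x2 * y1)"] rA t_def by simp
  thus ?thesis using True t_def by simp
qed

lemma card_split:
  assumes "finite P"
  shows "card P = card {q. Some q \<in> P} + (if None \<in> P then 1 else 0)"
proof -
  have e: "P = Some ` {q. Some q \<in> P} \<union> (if None \<in> P then {None} else {})"
  proof (rule set_eqI)
    fix x show "x \<in> P \<longleftrightarrow> x \<in> Some ` {q. Some q \<in> P} \<union> (if None \<in> P then {None} else {})"
      by (cases x) auto
  qed
  have fin: "finite {q. Some q \<in> P}" using assms finite_vimageI[of P Some] by (simp add: vimage_def)
  have "card (Some ` {q. Some q \<in> P}) = card {q. Some q \<in> P}" by (simp add: card_image)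
  moreover have "Some ` {q. Some q \<in> P} \<inter> (if None \<in> P then {None} else {}) = {}" by auto
  ultimately show ?thesis using card_Un_disjoint[of "Some ` {q. Some q \<in> P}" "(if None \<in> P then {None} else {})"] fin
    by (subst e) (simp)
qed

lemma inv_aux:
  fixes al be ga ep u v D :: "'a::field"
  assumes "D \<noteq> 0" "D = al * ep - be * ga"
  shows "al * (ep * u / D) + be * (- (ga * u) / D) = u"
        "ga * (ep * u / D) + ep * (- (ga * u) / D) = 0"
        "al * (- (be * v) / D) + be * (al * v / D) = 0"
        "ga * (- (be * v) / D) + ep * (al * v / D) = v"
        "(ep * u / D) * (al * v / D) - (- (be * v) / D) * (- (ga * u) / D) = u * v / D"
proof -
  have "al * (ep * u / D) + be * (- (ga * u) / D) = (al * ep - be * ga) * u / D"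
    using assms(1) by (simp add: field_simps)
  thus "al * (ep * u / D) + be * (- (ga * u) / D) = u" using assms by simp
  show "ga * (ep * u / D) + ep * (- (ga * u) / D) = 0"
    using assms(1) by (simp add: field_simps)
  show "al * (- (be * v) / D) + be * (al * v / D) = 0"
    using assms(1) by (simp add: field_simps)
  have "ga * (- (be * v) / D) + ep * (al * v / D) = (al * ep - be * ga) * v / D"
    using assms(1) by (simp add: field_simps)
  thus "ga * (- (be * v) / D) + ep * (al * v / D) = v" using assms by simp
  have "(ep * u / D) * (al * v / D) - (- (be * v) / D) * (- (ga * u) / D) = (al * ep - be * ga) * (u * v) / (D * D)"
    using assms(1) by (simp add: field_simps)
  thus "(ep * u / D) * (al * v / D) - (- (be * v) / D) * (- (ga * u) / D) = u * v / D"
    using assms by simp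
qed

theorem lemma7p2:
  fixes d :: nat and f g :: "complex poly" and P :: "complex option set"
  assumes "line_subbundle d f g"
    and "finite P"
    and "card P > 2 * d + 1"
  shows "\<not> evenly_split (shift_stalk d f g P)"
proof
  assume "evenly_split (shift_stalk d f g P)"
  then obtain a b :: int where ab: "\<bar>a - b\<bar> \<le> 1" and iso0: "sheaf_iso (shift_stalk d f g P) (split_stalk a b)"
    unfolding evenly_split_def by blast
  then obtain al be ga ep :: rf where det0: "al * ep - be * ga \<noteq> 0" and
    iso: "\<And>q s. shift_stalk d f g P q s \<longleftrightarrow>
       split_stalk a b q (al * fst s + be * snd s, ga * fst s + ep * snd s)"
    unfolding sheaf_iso_def by blast
  define F where "F = shift_stalk d f g P"
  define S where "S = {q. Some q \<in> P}"
  define m where "m = card P"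
  have finS: "finite S" using assms(2) finite_vimageI[of P Some] by (simp add: vimage_def S_def)
  have mS: "m = card S + (if None \<in> P then 1 else 0)" using card_split[OF assms(2)] m_def S_def by simp
  define De where "De = al * ep - be * ga"
  have regA: "regular_at (Some q) al \<and> regular_at (Some q) be \<and> regular_at (Some q) ga \<and> regular_at (Some q) ep" for q
  proof -
    have "shift_stalk d f g P (Some q) (1, 0)" "shift_stalk d f g P (Some q) (0, 1)"
      using W_in reg_one reg_zero by blast+
    thus ?thesis using iso by (simp add: split_stalk_def)
  qed
  have "regular_at (Some q) De" for q
    using regA[of q] reg_diff reg_mult unfolding De_def by blast
  then obtain D where D: "De = Fract D 1" using poly_of_reg by blast
  have D0: "D \<noteq> 0" using det0 D De_def by (auto simp: Zero_fract_def eq_fract)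
  have De0: "De \<noteq> 0" using det0 De_def by simp
  note invM = inv_aux[OF De0 De_def]
  have iD: "u * v / De = u * v * Fract 1 D" for u v
    using D by (simp add: divide_inverse One_fract_def)
  have C1: "order q D \<le> (if q \<in> S then 1 else 0)" for q
  proof -
    have "split_stalk a b (Some q) (1, 0)" "split_stalk a b (Some q) (0, 1)"
      using reg_one reg_zero by (simp_all add: split_stalk_def)
    hence s1: "shift_stalk d f g P (Some q) (ep * 1 / De, - (ga * 1) / De)"
      and s2: "shift_stalk d f g P (Some q) (- (be * 1) / De, al * 1 / De)"
      by (simp_all only: iso fst_conv snd_conv invM)
    have dd: "(ep * 1 / De) * (al * 1 / De) - (- (be * 1) / De) * (- (ga * 1) / De) = Fract 1 D"
      using invM(5)[of 1 1] iD[of 1 1] by simp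
    note dl = det_lemma[OF s1 s2, unfolded dd]
    show ?thesis
    proof (cases "q \<in> S")
      case False
      hence "regular_at (Some q) (Fract 1 D)" using dl S_def by simp
      hence "order q D \<le> order q 1" using reg_fin_D[OF D0, of 1] by simp
      thus ?thesis using False by simp
    next
      case True
      hence "regular_at (Some q) (local_param (Some q) * Fract 1 D)" using dl S_def by simp
      hence "regular_at (Some q) (Fract [:-q,1:] D)" by (simp add: local_param_def)
      hence "order q D \<le> order q [:-q,1:]" using reg_fin_D[OF D0, of "[:-q,1:]"] by simp
      moreover have "order q [:-q,1:] = 1" using order_power_n_n[of q 1] by simp
      ultimately show ?thesis using True by simp
    qed
  qed
  have degD: "degree D \<le> card S" using deg_le_card[OF D0 finS C1] .
  have C2: "a + b \<le> int (degree D) + (if None \<in> P then 1 else 0)"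
  proof -
    have za: "zcoord powi (-c) * zcoord powi c = 1" for c
      using power_int_add[of zcoord "-c" c] zcoord_nz by simp
    have "split_stalk a b None (zcoord powi a, 0)" "split_stalk a b None (0, zcoord powi b)"
      using reg_one reg_zero za by (simp_all add: split_stalk_def)
    hence s1: "shift_stalk d f g P None (ep * zcoord powi a / De, - (ga * zcoord powi a) / De)"
      and s2: "shift_stalk d f g P None (- (be * zcoord powi b) / De, al * zcoord powi b / De)"
      by (simp_all only: iso fst_conv snd_conv invM)
    have dd: "(ep * zcoord powi a / De) * (al * zcoord powi b / De) - (- (be * zcoord powi b) / De) * (- (ga * zcoord powi a) / De)
       = zcoord powi (a + b) * Fract 1 D"
      using invM(5) iD power_int_add[of zcoord a b] zcoord_nz by simp
    note dl = det_lemma[OF s1 s2, unfolded dd]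
    show ?thesis
    proof (cases "None \<in> P")
      case False
      hence "regular_at None (zcoord powi (a + b) * Fract 1 D)" using dl by simp
      thus ?thesis using reg_inf_z_iff[of 1 D "a+b"] D0 False by simp
    next
      case True
      hence "regular_at None (local_param None * (zcoord powi (a + b) * Fract 1 D))" using dl by simp
      moreover have "local_param None * (zcoord powi (a + b) * Fract 1 D) = zcoord powi (a + b - 1) * Fract 1 D"
        using power_int_add[of zcoord "-1" "a+b"] zcoord_nz by (simp add: param_inf)
      ultimately have "regular_at None (zcoord powi (a + b - 1) * Fract 1 D)" by simp
      thus ?thesis using reg_inf_z_iff[of 1 D "a+b-1"] D0 True by simp
    qed
  qed
  have abm: "a + b \<le> int m"
  proof (cases "None \<in> P")
    case True
    hence "a + b \<le> int (degree D) + 1" "m = card S + 1" using C2 mS by auto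
    thus ?thesis using degD by linarith
  next
    case False
    hence "a + b \<le> int (degree D)" "m = card S" using C2 mS by auto
    thus ?thesis using degD by linarith
  qed
  have fg: "degree f \<le> d" "degree g \<le> d" "coeff f d \<noteq> 0 \<or> coeff g d \<noteq> 0"
    using assms(1) by (auto simp: line_subbundle_def)
  define h where "h = hpoly S"
  have h0: "h \<noteq> 0" using hpoly_nz h_def by simp
  have degh: "degree h = card S" using hpoly_deg[OF finS] h_def by simp
  define k where "k = m - d"
  have km: "k + d = m" using assms(3) m_def k_def by simp
  define U where "U = al * Fract f h + be * Fract g h"
  define V where "V = ga * Fract f h + ep * Fract g h"
  have sfin: "shift_stalk d f g P (Some q) (Fract f h, Fract g h)" for q
  proof (cases "q \<in> S")
    case False
    hence "poly h q \<noteq> 0" using hpoly_notin[OF finS] h_def by simp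
    hence "regular_at (Some q) (Fract f h)" "regular_at (Some q) (Fract g h)"
      using h0 reg_fin_I by auto
    thus ?thesis using W_in by blast
  next
    case True
    define h1 where "h1 = hpoly (S - {q})"
    have hh: "h = [:-q,1:] * h1" using hpoly_in[OF finS True] h_def h1_def by simp
    have h10: "poly h1 q \<noteq> 0" "h1 \<noteq> 0" using hpoly_notin[of "S - {q}" q] finS h1_def hpoly_nz by auto
    have e: "local_param (Some q) * Fract p h = Fract p h1" for p
      using hh mult_fract_cancel[of "[:-q,1:]" p h1] by (simp add: local_param_def del: mult_pCons_left)
    have "(value_at (Some q) (Fract f h1), value_at (Some q) (Fract g h1)) \<in> line_fiber d f g (Some q)"
      using val_fin[OF h10(2,1)] unfolding line_fiber_def
      by (auto intro!: exI[of _ "1 / poly h1 q"])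
    thus ?thesis using True S_def e reg_fin_I[OF h10(2,1)] by (simp add: shift_stalk_def)
  qed
  have "regular_at (Some q) U \<and> regular_at (Some q) V" for q
    using iso[of "Some q" "(Fract f h, Fract g h)"] sfin[of q] U_def V_def by (simp add: split_stalk_def)
  then obtain u v where u: "U = Fract u 1" and v: "V = Fract v 1" using poly_of_reg by metis
  have zk: "zcoord ^ k * Fract p h = Fract (X ^ k * p) h" for p
    by (simp add: zcoord_pow)
  have dk: "degree (X ^ k * p) \<le> m" if "degree p \<le> d" for p
    using degX[of k p] that km by auto
  have ck: "coeff (X ^ k * p) m = coeff p d" for p
  proof -
    have "X ^ k = monom 1 k" by (simp add: monom_altdef)
    moreover have "m - k = d" using km by simp
    ultimately show ?thesis using km coeff_monom_mult[of 1 k p m] by simp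
  qed
  have sinf: "shift_stalk d f g P None (zcoord ^ k * Fract f h, zcoord ^ k * Fract g h)"
  proof (cases "None \<in> P")
    case False
    hence "m = degree h" using mS degh by simp
    hence "regular_at None (Fract (X ^ k * f) h)" "regular_at None (Fract (X ^ k * g) h)"
      using dk fg reg_inf_I h0 by auto
    thus ?thesis using W_in zk by simp
  next
    case True
    have Xh0: "X * h \<noteq> 0" using h0 by simp
    have dXh: "degree (X * h) = m" using True mS degh h0 degree_mult_eq[of X h] by simp
    have lXh: "lead_coeff (X * h) = 1" using hpoly_lead h_def lead_coeff_mult[of X h] by simp
    have e: "local_param None * (zcoord ^ k * Fract p h) = Fract (X ^ k * p) (X * h)" for p
      by (simp add: zk local_param_def)
    have r: "regular_at None (Fract (X ^ k * f) (X * h))" "regular_at None (Fract (X ^ k * g) (X * h))"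
      using reg_inf_I[OF Xh0] dk fg dXh by auto
    have "value_at None (Fract (X ^ k * f) (X * h)) = coeff f d"
         "value_at None (Fract (X ^ k * g) (X * h)) = coeff g d"
      using val_inf[OF Xh0] dk fg dXh lXh ck by auto
    hence "(value_at None (Fract (X ^ k * f) (X * h)), value_at None (Fract (X ^ k * g) (X * h)))
           \<in> line_fiber d f g None"
      unfolding line_fiber_def by (auto intro!: exI[of _ 1])
    thus ?thesis using True r e by (simp add: shift_stalk_def)
  qed
  have "regular_at None (zcoord powi (-a) * (zcoord ^ k * U)) \<and> regular_at None (zcoord powi (-b) * (zcoord ^ k * V))"
    using iso[of None "(zcoord ^ k * Fract f h, zcoord ^ k * Fract g h)"] sinf unfolding U_def V_def
    by (simp add: split_stalk_def algebra_simps)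
  moreover have zz: "zcoord powi c * (zcoord ^ k * W) = zcoord powi (c + int k) * W" for c W
    using power_int_add[of zcoord c "int k"] zcoord_nz by simp
  ultimately have ru: "regular_at None (zcoord powi (- a + int k) * Fract u 1)"
     and rv: "regular_at None (zcoord powi (- b + int k) * Fract v 1)" using u v by (simp_all only: zz)
  have "u \<noteq> 0 \<or> v \<noteq> 0"
  proof (rule ccontr)
    assume "\<not> (u \<noteq> 0 \<or> v \<noteq> 0)"
    hence "U = 0" "V = 0" using u v by (auto simp: Zero_fract_def)
    have "De * Fract f h = ep * U - be * V" "De * Fract g h = al * V - ga * U"
      unfolding De_def U_def V_def by (simp_all add: algebra_simps)
    hence "De * Fract f h = 0" "De * Fract g h = 0" using \<open>U = 0\<close> \<open>V = 0\<close> by simp_all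
    hence "Fract f h = 0" "Fract g h = 0" using De0 by auto
    hence "f = 0" "g = 0" using h0 by (auto simp: Zero_fract_def eq_fract)
    thus False using fg(3) by simp
  qed
  moreover have "u \<noteq> 0 \<Longrightarrow> - a + int k + int (degree u) \<le> 0"
    using ru reg_inf_z_iff[of u 1 "- a + int k"] by simp
  moreover have "v \<noteq> 0 \<Longrightarrow> - b + int k + int (degree v) \<le> 0"
    using rv reg_inf_z_iff[of v 1 "- b + int k"] by simp
  ultimately have kab: "int m - int d \<le> a \<or> int m - int d \<le> b"
    using km by linarith
  show False using abm kab ab assms(3) m_def by linarith
qed

end
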